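(* Let $q$ be a prime power, $L$ an integer with $1\le L<q$, and $r\in[0,\frac{L}{L+1})$ with $rn\in\mathbb{N}$. If $C\subseteq\mathbb{F}_q^n$ is a linear $[n,k]_q$ code that is $(r,L)$ list-decodable with $k=n-\lceil\frac{L+1}{L}rn\rceil$, then $d(C)\ge n-k$. Moreover, if $L\mid rn$ then $d(C)\ge n-k+1$, i.e. $C$ is MDS.
   Context: A linear $[n,k]_q$ code is a $k$-dimensional subspace of $\mathbb{F}_q^n$; $d(C)$ is its minimum Hamming distance; MDS means $d(C)=n-k+1$. $C$ is $(r,L)$ list-decodable if every Hamming ball of radius $rn$ in $\mathbb{F}_q^n$ contains at most $L$ codewords. *)

theory Defs
  imports "HOL-Analysis.Analysis" "HOL-Library.Extended_Nat"
begin

text \<open>Hamming distance on F_q^n, rendered as 'a^'n with 'a a finite field, n = CARD('n).\<close>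
definition hamming_dist :: "'a ^ 'n \<Rightarrow> 'a ^ 'n \<Rightarrow> nat" where
  "hamming_dist x y = card {i. x $ i \<noteq> y $ i}"

text \<open>Minimum distance of a code (infinity for codes with fewer than two words).\<close>
definition min_dist :: "('a ^ 'n) set \<Rightarrow> enat" where
  "min_dist C = (INF p \<in> {(x, y). x \<in> C \<and> y \<in> C \<and> x \<noteq> y}. enat (hamming_dist (fst p) (snd p)))"

definition linear_code :: "('a::field ^ 'n) set \<Rightarrow> nat \<Rightarrow> bool" where
  "linear_code C k \<longleftrightarrow> vec.subspace C \<and> vec.dim C = k"

definition list_decodable :: "('a ^ 'n::finite) set \<Rightarrow> real \<Rightarrow> nat \<Rightarrow> bool" where
  "list_decodable C r L \<longleftrightarrow>
     (\<forall>y. card {c \<in> C. real (hamming_dist c y) \<le> r * real CARD('n)} \<le> L)"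

end

theory Submission
  imports Defs
begin

lemma count_mod_le:
  fixes w L j :: nat
  assumes "j \<le> L"
  shows "card {m \<in> {0..<w}. m mod (L+1) \<noteq> j} \<le> w - w div (L+1)"
proof -
  let ?E = "{m \<in> {0..<w}. m mod (L+1) = j}"
  have sub: "(\<lambda>m. (L+1)*m + j) ` {0..<w div (L+1)} \<subseteq> ?E"
  proof
    fix x assume "x \<in> (\<lambda>m. (L+1)*m + j) ` {0..<w div (L+1)}"
    then obtain m where m: "m < w div (L+1)" "x = (L+1)*m + j" by auto
    have "Suc m \<le> w div (L+1)" using m by simp
    hence "(L+1)*Suc m \<le> (L+1)*(w div (L+1))" by (rule mult_le_mono2)
    also have "\<dots> \<le> w" by (metis div_mult_mod_eq le_add1 mult.commute)
    finally have "x < w" using m assms by simp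
    moreover have "x mod (L+1) = j"
    proof -
      have "x = j + m*(L+1)" using m by simp
      hence "x mod (L+1) = j mod (L+1)" by (simp only: mod_mult_self1)
      thus ?thesis using assms by simp
    qed
    ultimately show "x \<in> ?E" by simp
  qed
  have inj: "inj_on (\<lambda>m. (L+1)*m + j) {0..<w div (L+1)}"
  proof (rule inj_onI)
    fix x y assume "(L+1)*x + j = (L+1)*y + j"
    hence "(L+1)*x = (L+1)*y" by (rule add_right_imp_eq)
    thus "x = y" by (rule mult_left_cancel[THEN iffD1, rotated]) simp
  qed
  have "w div (L+1) \<le> card ?E"
    using card_mono[OF _ sub] card_image[OF inj] by simp
  moreover have "{m \<in> {0..<w}. m mod (L+1) \<noteq> j} = {0..<w} - ?E" by auto
  moreover have "card ({0..<w} - ?E) = w - card ?E"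
    by (subst card_Diff_subset) auto
  ultimately show ?thesis by simp
qed

lemma arith_key:
  fixes w L t :: nat
  assumes "L * w \<le> (L+1) * t"
  shows "w - w div (L+1) \<le> t"
proof -
  define a where "a = w div (L+1)"
  define b where "b = w mod (L+1)"
  have w: "w = (L+1)*a + b" unfolding a_def b_def by (metis div_mult_mod_eq mult.commute)
  have b: "b < L+1" unfolding b_def by simp
  have "(L+1)*(L*a + b) = L*w + b" unfolding w by (simp add: algebra_simps)
  also have "\<dots> \<le> (L+1)*t + b" using assms by simp
  also have "\<dots> < (L+1)*(t+1)" using b by simp
  finally have "L*a + b < t + 1" by (meson mult_less_cancel1)
  hence "L*a + b \<le> t" by simp
  moreover have "w - a = L*a + b" unfolding w by (simp add: algebra_simps)
  ultimately show ?thesis unfolding a_def by simp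
qed

lemma key:
  fixes C :: "('a::{finite, field} ^ 'n) set" and L t :: nat and c :: "'a ^ 'n"
  assumes L1: "1 \<le> L" and Lq: "L < CARD('a)"
    and sub: "vec.subspace C"
    and ld: "\<forall>y. card {c \<in> C. hamming_dist c y \<le> t} \<le> L"
    and cC: "c \<in> C" and c0: "c \<noteq> 0"
  shows "(L+1) * t < L * card {i. c $ i \<noteq> 0}"
proof (rule ccontr)
  define S where "S = {i. c $ i \<noteq> 0}"
  define w where "w = card S"
  assume "\<not> (L+1) * t < L * card {i. c $ i \<noteq> 0}"
  hence Lw: "L * w \<le> (L+1) * t" unfolding w_def S_def by simp
  obtain A :: "'a set" where A: "A \<subseteq> UNIV" "card A = L+1"
    using obtain_subset_with_card_n[of "L+1" "UNIV :: 'a set"] Lq by auto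
  obtain \<alpha> where \<alpha>: "bij_betw \<alpha> {0..<L+1} A"
    using ex_bij_betw_nat_finite[of A] A by auto
  have ainj: "inj_on \<alpha> {0..<L+1}" using \<alpha> bij_betw_def by blast
  obtain h where h: "bij_betw h S {0..<w}"
    using ex_bij_betw_finite_nat[of S] unfolding w_def by auto
  define y :: "'a ^ 'n" where "y = (\<chi> i. \<alpha> (h i mod (L+1)) * c $ i)"
  define B where "B = (\<lambda>j. \<alpha> j *s c) ` {0..<L+1}"
  have binj: "inj_on (\<lambda>j. \<alpha> j *s c) {0..<L+1}"
  proof (rule inj_onI)
    fix j1 j2 assume j: "j1 \<in> {0..<L+1}" "j2 \<in> {0..<L+1}" "\<alpha> j1 *s c = \<alpha> j2 *s c"
    obtain i where i: "c $ i \<noteq> 0" using c0 by (metis vec_eq_iff zero_index)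
    have "(\<alpha> j1 *s c) $ i = (\<alpha> j2 *s c) $ i" using j(3) by (rule arg_cong)
    hence "\<alpha> j1 * c $ i = \<alpha> j2 * c $ i" by simp
    hence "\<alpha> j1 = \<alpha> j2" using i by simp
    thus "j1 = j2" using ainj j by (meson inj_onD)
  qed
  have cardB: "card B = L+1" unfolding B_def using card_image[OF binj] by simp
  have "B \<subseteq> {c \<in> C. hamming_dist c y \<le> t}"
  proof
    fix x assume "x \<in> B"
    then obtain j where j: "j < L+1" "x = \<alpha> j *s c" unfolding B_def by auto
    have xC: "x \<in> C" unfolding j(2) by (rule vec.subspace_scale[OF sub cC])
    have eq: "{i. x $ i \<noteq> y $ i} = {i \<in> S. h i mod (L+1) \<noteq> j}"
    proof -
      { fix i
        have "x $ i \<noteq> y $ i \<longleftrightarrow> \<alpha> j * c $ i \<noteq> \<alpha> (h i mod (L+1)) * c $ i"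
          unfolding j y_def by simp
        also have "\<dots> \<longleftrightarrow> c $ i \<noteq> 0 \<and> \<alpha> j \<noteq> \<alpha> (h i mod (L+1))" by simp
        also have "\<dots> \<longleftrightarrow> i \<in> S \<and> h i mod (L+1) \<noteq> j"
        proof -
          have "h i mod (L+1) \<in> {0..<L+1}" by simp
          moreover have "j \<in> {0..<L+1}" using j(1) by simp
          ultimately have "\<alpha> j = \<alpha> (h i mod (L+1)) \<longleftrightarrow> j = h i mod (L+1)"
            using ainj unfolding inj_on_def by blast
          thus ?thesis unfolding S_def by auto
        qed
        finally have "x $ i \<noteq> y $ i \<longleftrightarrow> i \<in> S \<and> h i mod (L+1) \<noteq> j" . }
      thus ?thesis by auto
    qed
    have im: "h ` {i \<in> S. h i mod (L+1) \<noteq> j} = {m \<in> {0..<w}. m mod (L+1) \<noteq> j}"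
    proof -
      have "h ` {i \<in> S. h i mod (L+1) \<noteq> j} = {m \<in> h ` S. m mod (L+1) \<noteq> j}" by blast
      moreover have "h ` S = {0..<w}" using h by (rule bij_betw_imp_surj_on)
      ultimately show ?thesis by simp
    qed
    have hinj: "inj_on h {i \<in> S. h i mod (L+1) \<noteq> j}"
      by (rule inj_on_subset[OF bij_betw_imp_inj_on[OF h]]) blast
    have "card {i \<in> S. h i mod (L+1) \<noteq> j} = card {m \<in> {0..<w}. m mod (L+1) \<noteq> j}"
      using card_image[OF hinj] unfolding im by simp
    also have "\<dots> \<le> w - w div (L+1)" using count_mod_le[of j L w] j(1) by simp
    also have "\<dots> \<le> t" using arith_key[OF Lw] .
    finally have "hamming_dist x y \<le> t" unfolding hamming_dist_def eq .
    thus "x \<in> {c \<in> C. hamming_dist c y \<le> t}" using xC by simp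
  qed
  hence "L + 1 \<le> card {c \<in> C. hamming_dist c y \<le> t}"
    using cardB card_mono[of "{c \<in> C. hamming_dist c y \<le> t}" B] by simp
  thus False using ld[rule_format, of y] by simp
qed

theorem corollary6p5:
  fixes C :: "('a::{finite, field} ^ 'n) set"
    and r :: real and L k t :: nat
  assumes "1 \<le> L" and "L < CARD('a)"
    and "0 \<le> r" and "r < real L / real (L + 1)"
    and "r * real CARD('n) = real t"
    and "linear_code C k"
    and "list_decodable C r L"
    and "int k = int CARD('n) - \<lceil>real (L + 1) / real L * r * real CARD('n)\<rceil>"
  shows "min_dist C \<ge> enat (CARD('n) - k) \<and>
         (L dvd t \<longrightarrow> min_dist C \<ge> enat (CARD('n) - k + 1))"
proof -
  have sub: "vec.subspace C" using assms(6) unfolding linear_code_def by simp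
  have ld: "\<forall>y. card {c \<in> C. hamming_dist c y \<le> t} \<le> L"
    using assms(7) assms(5) unfolding list_decodable_def by simp
  define s where "s = \<lceil>real (L + 1) / real L * real t\<rceil>"
  have s: "int k = int CARD('n) - s" using assms(8) assms(5) unfolding s_def
    by (simp add: mult.assoc)
  have Lpos: "real L > 0" using assms(1) by simp
  have "0 \<le> real (L + 1) / real L * real t" by simp
  hence s0: "0 \<le> s" unfolding s_def by (metis ceiling_mono ceiling_zero)
  have wt: "real (L+1) * real t / real L < real (card {i. x $ i \<noteq> y $ i})"
    if "x \<in> C" "y \<in> C" "x \<noteq> y" for x y
  proof -
    have "x - y \<in> C" by (rule vec.subspace_diff[OF sub that(1,2)])
    moreover have "x - y \<noteq> 0" using that by simp
    ultimately have "(L+1) * t < L * card {i. (x - y) $ i \<noteq> 0}"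
      using key[OF assms(1,2) sub ld] by blast
    moreover have "{i. (x - y) $ i \<noteq> 0} = {i. x $ i \<noteq> y $ i}" by auto
    ultimately have "real ((L+1) * t) < real (L * card {i. x $ i \<noteq> y $ i})"
      by (metis of_nat_less_iff)
    thus ?thesis using Lpos by (simp add: pos_divide_less_eq algebra_simps)
  qed
  have P1: "enat (CARD('n) - k) \<le> enat (hamming_dist x y)"
    if "x \<in> C" "y \<in> C" "x \<noteq> y" for x y
  proof -
    have "s \<le> int (card {i. x $ i \<noteq> y $ i})" unfolding s_def
      using wt[OF that] by (simp add: ceiling_le_iff)
    thus ?thesis using s unfolding hamming_dist_def by simp
  qed
  have P2: "enat (CARD('n) - k + 1) \<le> enat (hamming_dist x y)"
    if xy: "x \<in> C" "y \<in> C" "x \<noteq> y" and dv: "L dvd t" for x y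
  proof -
    obtain u where u: "t = L * u" using dv by auto
    have ee: "real (L+1) / real L * real t = real ((L+1) * u)" using u Lpos by (simp add: field_simps)
    hence sv: "s = int ((L+1)*u)" unfolding s_def by (simp only: ceiling_of_nat)
    moreover have "real ((L+1)*u) < real (card {i. x $ i \<noteq> y $ i})"
      using wt[OF xy] ee by (simp add: times_divide_eq_left)
    hence "(L+1)*u < card {i. x $ i \<noteq> y $ i}" by (simp only: of_nat_less_iff)
    hence "int ((L+1)*u) < int (card {i. x $ i \<noteq> y $ i})" by (simp only: of_nat_less_iff)
    hence "s + 1 \<le> int (card {i. x $ i \<noteq> y $ i})" unfolding sv by (rule zless_imp_add1_zle)
    hence "CARD('n) - k + 1 \<le> card {i. x $ i \<noteq> y $ i}" using s s0 by linarith
    thus ?thesis unfolding hamming_dist_def by simp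
  qed
  show ?thesis unfolding min_dist_def
    using P1 P2 by (auto intro!: INF_greatest)
qed

end
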